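(* Let $P$ be a finite poset with height function $h$. Then $\mathsf{Z}_{P,h}([1]_q)=\chi_P$, where $\chi_P=\sum_{k\ge1}(-1)^{k-1}\#\operatorname{Ch}_k(P)$ is the Euler characteristic of the order complex of $P$. In particular, if $P$ has a unique minimum or a unique maximum, then $\mathsf{Z}_{P,h}([1]_q)=1$.
   Context: $q$ is an indeterminate; $[n]_q=(q^n-1)/(q-1)$ (so $[1]_q=1$). A height function is $h:P\to\mathbb{N}$ with $h(x)<h(y)$ whenever $y$ covers $x$. $\operatorname{Ch}_k(P)$ is the set of strict chains $c_1<\cdots<c_k$ in $P$. For a tuple $a=(a_1,\dots,a_k)$ of distinct nonnegative integers, $\mathsf{E}_a\in\mathbb{Q}(q)[x]$ is the unique polynomial with $\mathsf{E}_a([n]_q)=\sum_{m\in\mathbb{N}^k,\sum m_i=n}q^{\sum a_im_i}$ for all $n\ge0$. The $q$-Zeta polynomial is $\mathsf{Z}_{P,h}(x)=\sum_{k\ge1}\sum_{c\in\operatorname{Ch}_k(P)}q^{\sum_i h(c_i)}\mathsf{E}_{(h(c_1),\dots,h(c_k))}((x-[k+1]_q)/q^{k+1})$; it is the unique polynomial with $\mathsf{Z}_{P,h}([n]_q)=\sum_{e_1\le\cdots\le e_{n-1}}q^{\sum_j h(e_j)}$ for all $n\ge2$. *)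

theory Defs
  imports "HOL-Computational_Algebra.Polynomial" "HOL-Computational_Algebra.Fraction_Field"
begin

type_synonym qrat = "rat poly fract"

definition qvar :: qrat where
  "qvar = Fract [:0, 1:] 1"

definition qint :: "nat \<Rightarrow> qrat" where
  "qint n = (qvar ^ n - 1) / (qvar - 1)"

definition Epoly :: "nat list \<Rightarrow> qrat poly" where
  "Epoly a = (THE p. \<forall>n::nat. poly p (qint n) =
      (\<Sum>m\<in>{m::nat list. length m = length a \<and> sum_list m = n}.
          qvar ^ (\<Sum>i<length a. a ! i * m ! i)))"

definition chains :: "'a::order set \<Rightarrow> nat \<Rightarrow> 'a list set" where
  "chains P k = {c. length c = k \<and> set c \<subseteq> P \<and> sorted_wrt (<) c}"

definition covers_in :: "'a::order set \<Rightarrow> 'a \<Rightarrow> 'a \<Rightarrow> bool" where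
  "covers_in P x y \<longleftrightarrow> x \<in> P \<and> y \<in> P \<and> x < y \<and> \<not> (\<exists>z\<in>P. x < z \<and> z < y)"

definition height_fn :: "'a::order set \<Rightarrow> ('a \<Rightarrow> nat) \<Rightarrow> bool" where
  "height_fn P h \<longleftrightarrow> (\<forall>x y. covers_in P x y \<longrightarrow> h x < h y)"

text \<open>q-Zeta polynomial. Chains of length k > card P do not exist, so the sum
  over k \<ge> 1 is the finite sum over k = 1..card P.\<close>
definition qzeta :: "'a::order set \<Rightarrow> ('a \<Rightarrow> nat) \<Rightarrow> qrat poly" where
  "qzeta P h = (\<Sum>k\<in>{1..card P}. \<Sum>c\<in>chains P k.
      smult (qvar ^ sum_list (map h c))
        (pcompose (Epoly (map h c))
           [: - qint (k + 1) / qvar ^ (k + 1), 1 / qvar ^ (k + 1) :]))"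

definition euler_char :: "'a::order set \<Rightarrow> int" where
  "euler_char P = (\<Sum>k\<in>{1..card P}. (-1) ^ (k - 1) * int (card (chains P k)))"

end

theory Submission
  imports Defs
begin

lemma qvar_pow: "qvar ^ n = Fract ([:0,1:] ^ n) 1"
  by (induction n) (simp_all add: qvar_def One_fract_def)

lemma qvar_pow_inj: "qvar ^ a = qvar ^ b \<Longrightarrow> a = b"
proof -
  assume "qvar ^ a = qvar ^ b"
  hence "([:0,1:] ^ a :: rat poly) = [:0,1:] ^ b" by (simp add: qvar_pow eq_fract)
  hence "degree ([:0,1:] ^ a :: rat poly) = degree ([:0,1:] ^ b :: rat poly)" by simp
  thus "a = b" by (simp add: degree_power_eq)
qed

lemma qvar_nz: "qvar \<noteq> 0"
  using qvar_pow_inj[of 1 0] by (auto simp: qvar_def Zero_fract_def eq_fract)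

lemma qvar_ne1: "qvar \<noteq> 1"
  using qvar_pow_inj[of 1 0] by auto

lemma qvar_m1: "qvar - 1 \<noteq> 0"
  using qvar_ne1 by simp

lemma qint_Suc: "qint (Suc n) = 1 + qvar * qint n"
  using qvar_m1 by (simp add: qint_def field_simps)

lemma qint_1: "qint 1 = 1"
  using qvar_m1 by (simp add: qint_def)

lemma qint_inj: "qint n = qint m \<Longrightarrow> n = m"
  using qvar_m1 qvar_pow_inj by (simp add: qint_def)

lemma qvar_pow_qint: "1 + qint n * (qvar - 1) = qvar ^ n"
  using qvar_m1 by (simp add: qint_def)

definition zz :: "nat \<Rightarrow> qrat" where
  "zz k = (1 - qint (Suc k)) / qvar ^ Suc k"

lemma zz_step: "1 + qvar * zz (Suc L) = zz L"
  using qvar_nz qvar_m1 by (simp add: zz_def qint_def field_simps)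

lemma zz_step': "1 + zz (Suc L) * qvar = zz L"
  using zz_step by (simp add: mult.commute)

lemma zz_1: "1 + zz (Suc 0) * (qvar - 1) = 1 / qvar"
  using qvar_nz qvar_m1 by (simp add: zz_def qint_def field_simps)


fun Fr :: "nat list \<Rightarrow> nat \<Rightarrow> qrat" where
  "Fr [] n = (if n = 0 then 1 else 0)"
| "Fr (a # R) n = (\<Sum>j\<le>n. qvar ^ (a * j) * Fr R (n - j))"

lemma finite_lists_sum: "finite {m::nat list. length m = k \<and> sum_list m = n}"
proof (rule finite_subset)
  show "{m::nat list. length m = k \<and> sum_list m = n} \<subseteq> {m. set m \<subseteq> {0..n} \<and> length m = k}"
    using member_le_sum_list by fastforce
  show "finite {m. set m \<subseteq> {0..n} \<and> length m = k}"
    by (rule finite_lists_length_eq) simp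
qed

lemma Fset: "(\<Sum>m\<in>{m::nat list. length m = length a \<and> sum_list m = n}.
          qvar ^ (\<Sum>i<length a. a ! i * m ! i)) = Fr a n"
proof (induction a arbitrary: n)
  case Nil
  have "{m::nat list. length m = 0 \<and> sum_list m = n} = (if n = 0 then {[]} else {})" by auto
  thus ?case by simp
next
  case (Cons a R)
  let ?S = "\<lambda>n. {m::nat list. length m = length R \<and> sum_list m = n}"
  have img: "{m::nat list. length m = length (a#R) \<and> sum_list m = n}
      = (\<lambda>(j,m'). j # m') ` (SIGMA j:{..n}. ?S (n - j))"
  proof (rule set_eqI, rule iffI)
    fix m assume "m \<in> {m::nat list. length m = length (a#R) \<and> sum_list m = n}"
    then obtain j m' where "m = j # m'" "length m' = length R" "j + sum_list m' = n"
      by (cases m) auto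
    thus "m \<in> (\<lambda>(j,m'). j # m') ` (SIGMA j:{..n}. ?S (n - j))"
      by (auto intro!: image_eqI[where x="(j,m')"])
  qed auto
  have inj: "inj_on (\<lambda>(j,m'). j # m') (SIGMA j:{..n}. ?S (n - j))"
    by (auto simp: inj_on_def)
  have "(\<Sum>m\<in>{m::nat list. length m = length (a#R) \<and> sum_list m = n}.
          qvar ^ (\<Sum>i<length (a#R). (a#R) ! i * m ! i))
      = (\<Sum>x\<in>(SIGMA j:{..n}. ?S (n - j)). qvar ^ (\<Sum>i<length (a#R). (a#R) ! i * (fst x # snd x) ! i))"
    unfolding img by (subst sum.reindex[OF inj]) (simp add: case_prod_beta)
  also have "\<dots> = (\<Sum>(j,m')\<in>(SIGMA j:{..n}. ?S (n - j)). qvar ^ (a * j) * qvar ^ (\<Sum>i<length R. R ! i * m' ! i))"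
    by (rule sum.cong) (auto simp del: sum.lessThan_Suc simp add: sum.lessThan_Suc_shift power_add)
  also have "\<dots> = (\<Sum>j\<le>n. \<Sum>m'\<in>?S (n - j). qvar ^ (a * j) * qvar ^ (\<Sum>i<length R. R ! i * m' ! i))"
    by (rule sum.Sigma[symmetric]) (auto simp: finite_lists_sum)
  also have "\<dots> = (\<Sum>j\<le>n. qvar ^ (a * j) * Fr R (n - j))"
    by (simp add: sum_distrib_left[symmetric] Cons.IH)
  finally show ?case by simp
qed

lemma Fr_0: "Fr (a # R) 0 = Fr R 0" by simp

lemma Fr_Suc: "Fr (a # R) (Suc n) = Fr R (Suc n) + qvar ^ a * Fr (a # R) n"
proof -
  have "Fr (a # R) (Suc n) = Fr R (Suc n) + (\<Sum>j\<le>n. qvar ^ (a * Suc j) * Fr R (Suc n - Suc j))"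
    by (simp only: Fr.simps sum.atMost_Suc_shift) simp
  also have "\<dots> = Fr R (Suc n) + qvar ^ a * Fr (a # R) n"
    by (simp add: sum_distrib_left power_add mult.assoc)
  finally show ?thesis .
qed

declare Fr.simps(2)[simp del]

lemma Fr_ident: "(qvar ^ a1 - qvar ^ a2) * Fr (a1 # a2 # R) n
   = Fr (a1 # R) (Suc n) - Fr (a2 # R) (Suc n)"
proof (induction n)
  case 0
  show ?case by (simp add: Fr_Suc Fr_0 algebra_simps)
next
  case (Suc n)
  have "(qvar ^ a1 - qvar ^ a2) * Fr (a1 # a2 # R) (Suc n)
     = (qvar ^ a1 - qvar ^ a2) * Fr (a2 # R) (Suc n) + qvar ^ a1 * ((qvar ^ a1 - qvar ^ a2) * Fr (a1 # a2 # R) n)"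
    by (simp add: Fr_Suc algebra_simps)
  also have "\<dots> = (qvar ^ a1 - qvar ^ a2) * Fr (a2 # R) (Suc n) + qvar ^ a1 * (Fr (a1 # R) (Suc n) - Fr (a2 # R) (Suc n))"
    by (simp add: Suc.IH)
  also have "\<dots> = Fr (a1 # R) (Suc (Suc n)) - Fr (a2 # R) (Suc (Suc n))"
    by (simp only: Fr_Suc[of _ _ "Suc n"]) (simp add: algebra_simps)
  finally show ?case .
qed

fun Ep :: "nat list \<Rightarrow> qrat poly" where
  "Ep [] = 0"
| "Ep [a] = [:1, qvar - 1:] ^ a"
| "Ep (a1 # a2 # R) = smult (1 / (qvar ^ a1 - qvar ^ a2)) (pcompose (Ep (a1 # R) - Ep (a2 # R)) [:1, qvar:])"

lemma Ep_correct: "distinct a \<Longrightarrow> a \<noteq> [] \<Longrightarrow> poly (Ep a) (qint n) = Fr a n"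
proof (induction a arbitrary: n rule: Ep.induct)
  case 1 thus ?case by simp
next
  case (2 a)
  have "Fr [a] n = (\<Sum>j\<le>n. qvar ^ (a * j) * (if n - j = 0 then 1 else 0))"
    by (simp add: Fr.simps(2))
  also have "\<dots> = (\<Sum>j\<in>{n}. qvar ^ (a * j))"
    by (rule sum.mono_neutral_cong_right) auto
  finally show ?case by (simp add: poly_power qvar_pow_qint) (metis power_mult mult.commute)
next
  case (3 a1 a2 R)
  have ne: "qvar ^ a1 - qvar ^ a2 \<noteq> 0" using 3(3) qvar_pow_inj by auto
  have "poly (Ep (a1 # a2 # R)) (qint n) = (Fr (a1 # R) (Suc n) - Fr (a2 # R) (Suc n)) / (qvar ^ a1 - qvar ^ a2)"
    using 3(1)[of "Suc n"] 3(2)[of "Suc n"] 3(3) qint_Suc[of n] by (simp add: poly_pcompose mult.commute)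
  also have "\<dots> = Fr (a1 # a2 # R) n" using ne Fr_ident[of a1 a2 R n] by (simp add: field_simps)
  finally show ?case .
qed

lemma Ep_value: "distinct a \<Longrightarrow> length a = Suc L \<Longrightarrow>
   poly (Ep a) (zz (Suc L)) = (-1) ^ L / qvar ^ sum_list a"
proof (induction a arbitrary: L rule: Ep.induct)
  case 1 thus ?case by simp
next
  case (2 a)
  thus ?case using zz_1 by (simp add: poly_power power_one_over)
next
  case (3 a1 a2 R)
  then obtain L' where L: "L = Suc L'" by auto
  have ne: "qvar ^ a1 - qvar ^ a2 \<noteq> 0" using 3(3) qvar_pow_inj by auto
  have e1: "poly (Ep (a1 # R)) (zz (Suc L')) = (-1) ^ L' / qvar ^ sum_list (a1 # R)"
    using 3 L by auto
  have e2: "poly (Ep (a2 # R)) (zz (Suc L')) = (-1) ^ L' / qvar ^ sum_list (a2 # R)"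
    using 3 L by auto
  have "poly (Ep (a1 # a2 # R)) (zz (Suc L)) =
     ((-1) ^ L' / qvar ^ sum_list (a1 # R) - (-1) ^ L' / qvar ^ sum_list (a2 # R)) / (qvar ^ a1 - qvar ^ a2)"
    using L by (simp add: poly_pcompose zz_step' e1 e2)
  also have "\<dots> = (-1) ^ L / qvar ^ sum_list (a1 # a2 # R)"
    using ne qvar_nz L by (simp add: power_add field_simps)
  finally show ?case .
qed


lemma poly_eq_on_qint:
  assumes "\<forall>n. poly p (qint n) = poly r (qint n)"
  shows "p = r"
proof (rule ccontr)
  assume "p \<noteq> r"
  hence "p - r \<noteq> 0" by simp
  hence fin: "finite {x. poly (p - r) x = 0}" by (rule poly_roots_finite)
  have "range qint \<subseteq> {x. poly (p - r) x = 0}" using assms by auto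
  hence "finite (range qint)" using fin finite_subset by blast
  moreover have "inj qint" using qint_inj by (auto simp: inj_def)
  ultimately show False using range_inj_infinite by blast
qed

lemma Epoly_Ep: "distinct a \<Longrightarrow> a \<noteq> [] \<Longrightarrow> Epoly a = Ep a"
  unfolding Epoly_def
proof (rule the_equality)
  assume "distinct a" "a \<noteq> []"
  thus "\<forall>n. poly (Ep a) (qint n) = (\<Sum>m\<in>{m. length m = length a \<and> sum_list m = n}.
        qvar ^ (\<Sum>i<length a. a ! i * m ! i))"
    by (simp add: Fset Ep_correct)
  fix p assume "\<forall>n. poly p (qint n) = (\<Sum>m\<in>{m. length m = length a \<and> sum_list m = n}.
        qvar ^ (\<Sum>i<length a. a ! i * m ! i))"
  with \<open>distinct a\<close> \<open>a \<noteq> []\<close> show "p = Ep a"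
    by (intro poly_eq_on_qint) (simp add: Fset Ep_correct)
qed

lemma h_mono_aux:
  assumes "finite P" "height_fn P h"
  shows "card {z\<in>P. x < z \<and> z < y} = N \<Longrightarrow> x \<in> P \<Longrightarrow> y \<in> P \<Longrightarrow> x < y \<Longrightarrow> h x < h y"
proof (induction N arbitrary: x y rule: less_induct)
  case (less N)
  show ?case
  proof (cases "\<exists>z\<in>P. x < z \<and> z < y")
    case False
    hence "covers_in P x y" using less.prems by (simp add: covers_in_def)
    thus ?thesis using assms(2) by (simp add: height_fn_def)
  next
    case True
    then obtain z where z: "z \<in> P" "x < z" "z < y" by blast
    have f: "finite {z\<in>P. x < z \<and> z < y}" using assms(1) by simp
    have "{w\<in>P. x < w \<and> w < z} \<subset> {z\<in>P. x < z \<and> z < y}"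
      using z less_trans by auto
    hence c1: "card {w\<in>P. x < w \<and> w < z} < N" using psubset_card_mono[OF f] less.prems by simp
    have "{w\<in>P. z < w \<and> w < y} \<subset> {z\<in>P. x < z \<and> z < y}"
      using z less_trans by auto
    hence c2: "card {w\<in>P. z < w \<and> w < y} < N" using psubset_card_mono[OF f] less.prems by simp
    have "h x < h z" using less.IH[OF c1 refl] z less.prems by simp
    moreover have "h z < h y" using less.IH[OF c2 refl] z less.prems by simp
    ultimately show ?thesis by simp
  qed
qed

lemma h_mono:
  assumes "finite P" "height_fn P h" "x \<in> P" "y \<in> P" "x < y"
  shows "h x < h y"
  using h_mono_aux[OF assms(1,2) refl] assms by blast

lemma chain_h:
  assumes "finite P" "height_fn P h" "c \<in> chains P k"
  shows "distinct (map h c)" "length (map h c) = k"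
proof -
  have sc: "sorted_wrt (<) c" and sub: "set c \<subseteq> P" using assms(3) by (auto simp: chains_def)
  have "sorted_wrt (\<lambda>x y. h x < h y) c"
    using sorted_wrt_mono_rel[of c "(<)" "\<lambda>x y. h x < h y"] h_mono[OF assms(1,2)] sc sub by blast
  hence "sorted_wrt (<) (map h c)" by (simp add: sorted_wrt_map)
  thus "distinct (map h c)" by (simp add: strict_sorted_iff)
  show "length (map h c) = k" using assms(3) by (simp add: chains_def)
qed

lemma term_value:
  assumes "finite P" "height_fn P h" "c \<in> chains P k" "k \<ge> 1"
  shows "poly (smult (qvar ^ sum_list (map h c))
        (pcompose (Epoly (map h c))
           [: - qint (k + 1) / qvar ^ (k + 1), 1 / qvar ^ (k + 1) :])) (qint 1) = (-1) ^ (k - 1)"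
proof -
  obtain L where L: "k = Suc L" using assms(4) by (cases k) auto
  have d: "distinct (map h c)" and l: "length (map h c) = Suc L" using chain_h[OF assms(1-3)] L by auto
  hence ne: "map h c \<noteq> []" by auto
  have arg: "poly [: - qint (k + 1) / qvar ^ (k + 1), 1 / qvar ^ (k + 1) :] (qint 1) = zz (Suc L)"
    using L qint_1 by (simp add: zz_def diff_divide_distrib)
  show ?thesis
    unfolding poly_smult poly_pcompose arg Epoly_Ep[OF d ne] Ep_value[OF d l]
    using qvar_nz L by simp
qed

lemma qzeta_val:
  assumes "finite P" "height_fn P h"
  shows "poly (qzeta P h) (qint 1) = of_int (euler_char P)"
proof -
  have "poly (qzeta P h) (qint 1) = (\<Sum>k\<in>{1..card P}. \<Sum>c\<in>chains P k. ((-1) ^ (k - 1) :: qrat))"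
    unfolding qzeta_def poly_sum
    by (intro sum.cong refl) (use term_value[OF assms] in auto)
  also have "\<dots> = of_int (euler_char P)"
    by (simp add: euler_char_def mult.commute)
  finally show ?thesis .
qed


lemma sorted_less_distinct: "sorted_wrt ((<) :: 'a::order \<Rightarrow> _) xs \<Longrightarrow> distinct xs"
  by (induction xs) auto

lemma finite_chains: "finite P \<Longrightarrow> finite (chains P k)"
  unfolding chains_def
  by (rule finite_subset[OF _ finite_lists_length_eq[of P k]]) auto

lemma euler_one:
  fixes P :: "'a::order set"
  assumes fin: "finite P" and mP: "m \<in> P"
    and bij: "\<And>k. k \<ge> 1 \<Longrightarrow> card {c\<in>chains P (Suc k). m \<in> set c} = card {c\<in>chains P k. m \<notin> set c}"
  shows "euler_char P = 1"
proof -
  define N where "N k = int (card {c\<in>chains P k. m \<notin> set c})" for k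
  define M where "M k = int (card {c\<in>chains P k. m \<in> set c})" for k
  have split: "int (card (chains P k)) = N k + M k" for k
  proof -
    have "chains P k = {c\<in>chains P k. m \<notin> set c} \<union> {c\<in>chains P k. m \<in> set c}" by auto
    hence "card (chains P k) = card {c\<in>chains P k. m \<notin> set c} + card {c\<in>chains P k. m \<in> set c}"
      using finite_chains[OF fin, of k] by (metis (no_types, lifting) card_Un_disjoint disjoint_iff
          finite_Un mem_Collect_eq)
    thus ?thesis by (simp add: N_def M_def)
  qed
  have M1: "M 1 = 1"
  proof -
    have "{c\<in>chains P 1. m \<in> set c} = {[m]}"
      using mP by (auto simp: chains_def length_Suc_conv)
    thus ?thesis by (simp add: M_def)
  qed
  have MS: "M (Suc k) = N k" if "k \<ge> 1" for k using bij[OF that] by (simp add: M_def N_def)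
  have Nn: "N (card P) = 0"
  proof -
    have E: "{c\<in>chains P (card P). m \<notin> set c} = {}"
    proof (rule ccontr)
      assume "{c\<in>chains P (card P). m \<notin> set c} \<noteq> {}"
      then obtain c where c: "c \<in> chains P (card P)" "m \<notin> set c" by blast
      hence "distinct c" "set c \<subseteq> P" "length c = card P"
        using sorted_less_distinct by (auto simp: chains_def)
      hence "card (set c) = card P" by (simp add: distinct_card)
      hence "set c = P" using \<open>set c \<subseteq> P\<close> fin by (simp add: card_subset_eq)
      thus False using c mP by simp
    qed
    show ?thesis unfolding N_def E by simp
  qed
  have tel: "n \<ge> 1 \<Longrightarrow> (\<Sum>k\<in>{1..n}. (-1) ^ (k - 1) * (N k + M k)) = 1 + (-1) ^ (n - 1) * N n" for n
  proof (induction n rule: nat_induct_at_least)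
    case base thus ?case using M1 by simp
  next
    case (Suc n)
    have "(\<Sum>k\<in>{1..Suc n}. (-1) ^ (k - 1) * (N k + M k)) =
        1 + (-1) ^ (n - 1) * N n + (-1) ^ n * (N (Suc n) + N n)"
      using Suc by (simp add: MS)
    also have "\<dots> = 1 + (-1) ^ (Suc n - 1) * N (Suc n)"
      using Suc(1) by (cases n) (auto simp: algebra_simps)
    finally show ?case .
  qed
  have "card P \<ge> 1" using fin mP by (metis One_nat_def Suc_leI card_gt_0_iff empty_iff)
  hence "euler_char P = 1 + (-1) ^ (card P - 1) * N (card P)"
    unfolding euler_char_def split by (rule tel)
  thus ?thesis using Nn by simp
qed

lemma bij_min:
  fixes P :: "'a::order set"
  assumes mP: "m \<in> P" and mn: "\<forall>x\<in>P. m \<le> x"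
  shows "card {c\<in>chains P (Suc k). m \<in> set c} = card {c\<in>chains P k. m \<notin> set c}"
proof -
  have "{c\<in>chains P (Suc k). m \<in> set c} = (\<lambda>c. m # c) ` {c\<in>chains P k. m \<notin> set c}"
  proof (rule set_eqI, rule iffI)
    fix c' assume c': "c' \<in> {c\<in>chains P (Suc k). m \<in> set c}"
    then obtain x c where xc: "c' = x # c" by (auto simp: chains_def length_Suc_conv)
    have x: "x = m"
    proof (rule ccontr)
      assume "x \<noteq> m"
      hence "m \<in> set c" using c' xc by auto
      hence "x < m" using c' xc by (auto simp: chains_def)
      moreover have "m \<le> x" using mn c' xc by (auto simp: chains_def)
      ultimately show False by simp
    qed
    have "m \<notin> set c" using c' xc x by (auto simp: chains_def)
    thus "c' \<in> (\<lambda>c. m # c) ` {c\<in>chains P k. m \<notin> set c}"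
      using c' xc x by (auto simp: chains_def)
  next
    fix c' assume "c' \<in> (\<lambda>c. m # c) ` {c\<in>chains P k. m \<notin> set c}"
    then obtain c where c: "c' = m # c" "c \<in> chains P k" "m \<notin> set c" by auto
    have "\<forall>y\<in>set c. m < y" using c mn by (force simp: chains_def order.strict_iff_order)
    thus "c' \<in> {c\<in>chains P (Suc k). m \<in> set c}" using c mP by (auto simp: chains_def)
  qed
  thus ?thesis by (simp add: card_image)
qed

lemma bij_max:
  fixes P :: "'a::order set"
  assumes mP: "m \<in> P" and mn: "\<forall>x\<in>P. x \<le> m"
  shows "card {c\<in>chains P (Suc k). m \<in> set c} = card {c\<in>chains P k. m \<notin> set c}"
proof -
  have "{c\<in>chains P (Suc k). m \<in> set c} = (\<lambda>c. c @ [m]) ` {c\<in>chains P k. m \<notin> set c}"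
  proof (rule set_eqI, rule iffI)
    fix c' assume c': "c' \<in> {c\<in>chains P (Suc k). m \<in> set c}"
    then obtain x c where xc: "c' = c @ [x]" by (cases c' rule: rev_exhaust) (auto simp: chains_def)
    have x: "x = m"
    proof (rule ccontr)
      assume "x \<noteq> m"
      hence "m \<in> set c" using c' xc by auto
      hence "m < x" using c' xc by (auto simp: chains_def sorted_wrt_append)
      moreover have "x \<le> m" using mn c' xc by (auto simp: chains_def)
      ultimately show False by simp
    qed
    have "m \<notin> set c" using c' xc x by (auto simp: chains_def sorted_wrt_append)
    thus "c' \<in> (\<lambda>c. c @ [m]) ` {c\<in>chains P k. m \<notin> set c}"
      using c' xc x by (auto simp: chains_def sorted_wrt_append)
  next
    fix c' assume "c' \<in> (\<lambda>c. c @ [m]) ` {c\<in>chains P k. m \<notin> set c}"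
    then obtain c where c: "c' = c @ [m]" "c \<in> chains P k" "m \<notin> set c" by auto
    have "\<forall>y\<in>set c. y < m" using c mn by (force simp: chains_def order.strict_iff_order)
    thus "c' \<in> {c\<in>chains P (Suc k). m \<in> set c}" using c mP by (auto simp: chains_def sorted_wrt_append)
  qed
  moreover have "inj (\<lambda>c. c @ [m])" by (auto simp: inj_def)
  ultimately show ?thesis by (simp add: card_image inj_on_subset)
qed

theorem mainTheorem12:
  fixes P :: "'a::order set" and h :: "'a \<Rightarrow> nat"
  assumes "finite P" and "height_fn P h"
  shows "poly (qzeta P h) (qint 1) = of_int (euler_char P)
    \<and> (((\<exists>m\<in>P. \<forall>x\<in>P. m \<le> x) \<or> (\<exists>M\<in>P. \<forall>x\<in>P. x \<le> M))
         \<longrightarrow> poly (qzeta P h) (qint 1) = 1)"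
proof -
  have v: "poly (qzeta P h) (qint 1) = of_int (euler_char P)" by (rule qzeta_val[OF assms])
  have "euler_char P = 1" if "(\<exists>m\<in>P. \<forall>x\<in>P. m \<le> x) \<or> (\<exists>M\<in>P. \<forall>x\<in>P. x \<le> M)"
    using that
  proof
    assume "\<exists>m\<in>P. \<forall>x\<in>P. m \<le> x"
    then obtain m where "m \<in> P" "\<forall>x\<in>P. m \<le> x" by blast
    thus ?thesis using euler_one[OF assms(1)] bij_min by blast
  next
    assume "\<exists>m\<in>P. \<forall>x\<in>P. x \<le> m"
    then obtain m where "m \<in> P" "\<forall>x\<in>P. x \<le> m" by blast
    thus ?thesis using euler_one[OF assms(1)] bij_max by blast
  qed
  thus ?thesis using v by simp
qed

end
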